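(* Let $A\in\mathbb R^{d\times d}$ and suppose there is $\omega_*\in\mathbb R^d$, $\omega_*\ne0$, with $A\omega_*=A^{\mathsf T}\omega_*=0$. For any $c\in\mathbb R$ define $\tilde{\mathcal E}(\omega):=c-\langle\omega_*,\omega\rangle$ and $$\tilde{\mathbb J}(\omega):=\frac{1}{2|\omega_*|^2}\Big(\omega_*\otimes(A\omega)-(A\omega)\otimes\omega_*\Big).$$ Then the linear ODE $\dot\omega=\frac12A\omega$ admits the Hamiltonian system $(\mathbb R^d,\tilde{\mathcal E},\tilde{\mathbb J})$: $\tilde{\mathbb J}(\omega)$ is skew-symmetric for every $\omega$, the bracket $\{\mathcal G_1,\mathcal G_2\}(\omega):=\langle D\mathcal G_1(\omega),\tilde{\mathbb J}(\omega)D\mathcal G_2(\omega)\rangle$ satisfies the Jacobi identity for all $C^2$ functions $\mathcal G_1,\mathcal G_2,\mathcal G_3:\mathbb R^d\to\mathbb R$, and $\frac12A\omega=\tilde{\mathbb J}(\omega)D\tilde{\mathcal E}(\omega)$ for all $\omega\in\mathbb R^d$.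
   Context: $\langle\cdot,\cdot\rangle$ is the Euclidean inner product, $|\cdot|$ the Euclidean norm, $D$ the gradient, and $a\otimes b$ the outer product, i.e. the matrix with $(a\otimes b)v=\langle b,v\rangle a$. *)

theory Defs
  imports "HOL-Analysis.Analysis"
begin

definition outer :: "real^'n \<Rightarrow> real^'n \<Rightarrow> real^'n^'n" where
  "outer a b = (\<chi> i j. a $ i * b $ j)"

definition grad :: "(real^'n \<Rightarrow> real) \<Rightarrow> real^'n \<Rightarrow> real^'n" where
  "grad f x = (\<chi> i. frechet_derivative f (at x) (axis i 1))"

definition C2 :: "(real^'n \<Rightarrow> real) \<Rightarrow> bool" where
  "C2 f \<longleftrightarrow> (\<forall>x. f differentiable (at x)) \<and>
     (\<forall>x. (grad f) differentiable (at x)) \<and>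
     (\<forall>i j. continuous_on UNIV (\<lambda>x. grad (\<lambda>y. grad f y $ i) x $ j))"

definition bracket :: "(real^'n \<Rightarrow> real^'n^'n) \<Rightarrow> (real^'n \<Rightarrow> real) \<Rightarrow> (real^'n \<Rightarrow> real) \<Rightarrow> real^'n \<Rightarrow> real" where
  "bracket J G1 G2 x = grad G1 x \<bullet> (J x *v grad G2 x)"

end

theory Submission
  imports Defs
begin


lemma lin_grad:
  fixes L :: "real^'n \<Rightarrow> real"
  assumes "linear L"
  shows "(\<chi> i. L (axis i 1)) \<bullet> v = L v"
proof -
  have "L v = L (\<Sum>i\<in>UNIV. v$i *\<^sub>R axis i 1)"
    using basis_expansion[of v] by (simp add: scalar_mult_eq_scaleR)
  also have "\<dots> = (\<Sum>i\<in>UNIV. v$i * L (axis i 1))"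
    using assms by (simp add: linear_sum linear_scale)
  finally show ?thesis by (simp add: inner_vec_def mult.commute)
qed

lemma grad_deriv:
  assumes "f differentiable (at x)"
  shows "(f has_derivative (\<lambda>v. grad f x \<bullet> v)) (at x)"
proof -
  have d: "(f has_derivative frechet_derivative f (at x)) (at x)"
    using assms frechet_derivative_works by blast
  then have "linear (frechet_derivative f (at x))"
    using has_derivative_linear by blast
  then have "(\<lambda>v. grad f x \<bullet> v) = frechet_derivative f (at x)"
    unfolding grad_def using lin_grad by blast
  with d show ?thesis by simp
qed

lemma grad_unique:
  assumes "(f has_derivative D) (at x)"
  shows "grad f x \<bullet> v = D v"
proof -
  have "D = frechet_derivative f (at x)" using frechet_derivative_at[OF assms] .
  moreover have "linear D" using assms has_derivative_linear by blast
  ultimately show ?thesis unfolding grad_def using lin_grad by metis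
qed



lemma key_est:
  fixes f :: "real^'n \<Rightarrow> real"
  assumes df: "\<And>y. (f has_derivative (\<lambda>v. grad f y \<bullet> v)) (at y)"
    and L: "linear L"
    and r: "\<And>y. norm (y - x) < d \<Longrightarrow> norm (grad f y - grad f x - L (y - x)) \<le> e * norm (y - x)"
    and h: "0 < h" "h * (2 * norm a + norm b) < d" and e: "0 \<le> e"
  shows "\<bar>(f (x + h *\<^sub>R a + h *\<^sub>R b) - f (x + h *\<^sub>R a) - f (x + h *\<^sub>R b) + f x) - h^2 * (a \<bullet> L b)\<bar>
          \<le> h^2 * (e * norm a * (2 * norm a + norm b))"
proof -
  define g where "g = grad f"
  define c where "c = a \<bullet> L b"
  define \<psi> where "\<psi> = (\<lambda>s. f (x + s *\<^sub>R a + h *\<^sub>R b) - f (x + s *\<^sub>R a) - s * h * c)"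
  define \<psi>' where "\<psi>' = (\<lambda>s t. t * (g (x + s *\<^sub>R a + h *\<^sub>R b) \<bullet> a - g (x + s *\<^sub>R a) \<bullet> a - h * c))"
  have der: "(\<psi> has_derivative \<psi>' s) (at s)" for s
  proof -
    have 1: "((\<lambda>s. f (x + s *\<^sub>R a + h *\<^sub>R b)) has_derivative (\<lambda>t. g (x + s *\<^sub>R a + h *\<^sub>R b) \<bullet> (t *\<^sub>R a))) (at s)"
    proof -
      have "((\<lambda>s. x + s *\<^sub>R a + h *\<^sub>R b) has_derivative (\<lambda>t. t *\<^sub>R a)) (at s)"
        by (auto intro!: derivative_eq_intros)
      from has_derivative_compose[OF this df] show ?thesis unfolding g_def by simp
    qed
    have 2: "((\<lambda>s. f (x + s *\<^sub>R a)) has_derivative (\<lambda>t. g (x + s *\<^sub>R a) \<bullet> (t *\<^sub>R a))) (at s)"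
    proof -
      have "((\<lambda>s. x + s *\<^sub>R a) has_derivative (\<lambda>t. t *\<^sub>R a)) (at s)"
        by (auto intro!: derivative_eq_intros)
      from has_derivative_compose[OF this df] show ?thesis unfolding g_def by simp
    qed
    have 3: "((\<lambda>s. s * h * c) has_derivative (\<lambda>t. t * h * c)) (at s)"
      by (auto intro!: derivative_eq_intros)
    show ?thesis unfolding \<psi>_def \<psi>'_def
      using has_derivative_diff[OF has_derivative_diff[OF 1 2] 3]
      by (simp add: algebra_simps)
  qed
  have cont: "continuous_on {0..h} \<psi>"
    using der has_derivative_continuous continuous_at_imp_continuous_on by blast
  obtain \<xi> where \<xi>: "\<xi> \<in> {0<..<h}" and mv: "norm (\<psi> h - \<psi> 0) \<le> norm (\<psi>' \<xi> (h - 0))"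
    using mvt_general[OF h(1) cont der] by blast
  define r1 where "r1 = g (x + \<xi> *\<^sub>R a + h *\<^sub>R b) - g x - L (\<xi> *\<^sub>R a + h *\<^sub>R b)"
  define r2 where "r2 = g (x + \<xi> *\<^sub>R a) - g x - L (\<xi> *\<^sub>R a)"
  have n1: "norm (\<xi> *\<^sub>R a + h *\<^sub>R b) \<le> h * norm a + h * norm b"
    using \<xi> norm_triangle_ineq[of "\<xi> *\<^sub>R a" "h *\<^sub>R b"] h(1)
    by (auto intro!: order_trans[OF _ add_mono[OF mult_right_mono[of \<xi> h "norm a"]]])
  have n2: "norm (\<xi> *\<^sub>R a) \<le> h * norm a"
    using \<xi> by (auto intro!: mult_right_mono)
  have na: "0 \<le> norm a" "0 \<le> norm b" by auto
  have "h * norm a + h * norm b \<le> h * (2 * norm a + norm b)" using h(1) na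
    by (simp add: algebra_simps)
  then have "norm ((x + \<xi> *\<^sub>R a + h *\<^sub>R b) - x) < d" using n1 h by (simp only: add.assoc add_diff_cancel_left')
  then have "norm r1 \<le> e * norm (\<xi> *\<^sub>R a + h *\<^sub>R b)"
    using r[of "x + \<xi> *\<^sub>R a + h *\<^sub>R b"] unfolding r1_def g_def by (simp add: add.assoc)
  also have "\<dots> \<le> e * (h * norm a + h * norm b)" using n1 e by (rule mult_left_mono)
  finally have r1b: "norm r1 \<le> e * (h * norm a + h * norm b)" .
  have "h * norm a \<le> h * (2 * norm a + norm b)" using h(1) na
    by (simp add: algebra_simps)
  then have "norm ((x + \<xi> *\<^sub>R a) - x) < d" using n2 h by (simp only: add_diff_cancel_left')
  then have "norm r2 \<le> e * norm (\<xi> *\<^sub>R a)"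
    using r[of "x + \<xi> *\<^sub>R a"] unfolding r2_def g_def by simp
  also have "\<dots> \<le> e * (h * norm a)" using n2 e by (rule mult_left_mono)
  finally have r2b: "norm r2 \<le> e * (h * norm a)" .
  have lin: "L (\<xi> *\<^sub>R a + h *\<^sub>R b) - L (\<xi> *\<^sub>R a) = h *\<^sub>R L b"
    using L by (simp add: linear_add linear_scale)
  have "g (x + \<xi> *\<^sub>R a + h *\<^sub>R b) \<bullet> a - g (x + \<xi> *\<^sub>R a) \<bullet> a - h * c = a \<bullet> (r1 - r2)"
    unfolding r1_def r2_def c_def using lin
    by (simp add: inner_diff_right inner_commute algebra_simps)
  moreover have "\<bar>a \<bullet> (r1 - r2)\<bar> \<le> norm a * (norm r1 + norm r2)"
    using Cauchy_Schwarz_ineq2[of a "r1 - r2"] norm_triangle_ineq4[of r1 r2] na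
    by (meson mult_left_mono order_trans)
  moreover have "norm a * (norm r1 + norm r2) \<le> norm a * (e * (h * norm a + h * norm b) + e * (h * norm a))"
    using r1b r2b na by (intro mult_left_mono add_mono) auto
  ultimately have "\<bar>\<psi>' \<xi> h\<bar> \<le> h * (norm a * (e * (h * norm a + h * norm b) + e * (h * norm a)))"
    unfolding \<psi>'_def using h(1) by (simp add: abs_mult)
  also have "\<dots> = h^2 * (e * norm a * (2 * norm a + norm b))"
    by (simp add: power2_eq_square algebra_simps)
  finally have "\<bar>\<psi> h - \<psi> 0\<bar> \<le> h^2 * (e * norm a * (2 * norm a + norm b))"
    using mv by simp
  moreover have "\<psi> h - \<psi> 0 = (f (x + h *\<^sub>R a + h *\<^sub>R b) - f (x + h *\<^sub>R a) - f (x + h *\<^sub>R b) + f x) - h^2 * (a \<bullet> L b)"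
    unfolding \<psi>_def c_def by (simp add: power2_eq_square)
  ultimately show ?thesis by simp
qed



lemma small_zero:
  fixes z K :: real
  assumes K: "0 \<le> K" and H: "\<And>e. e > 0 \<Longrightarrow> \<bar>z\<bar> \<le> e * K"
  shows "z = 0"
proof (rule ccontr)
  assume "z \<noteq> 0"
  then have p: "\<bar>z\<bar> > 0" by simp
  have "\<bar>z\<bar> \<le> (\<bar>z\<bar> / (K + 1)) * K" using H[of "\<bar>z\<bar> / (K + 1)"] p K by simp
  also have "\<dots> < \<bar>z\<bar>" using p K by (simp add: field_simps)
  finally show False by simp
qed

lemma hess_sym:
  fixes f :: "real^'n \<Rightarrow> real"
  assumes df: "\<And>y. f differentiable (at y)" and dg: "(grad f has_derivative L) (at x)"
  shows "a \<bullet> L b = b \<bullet> L a"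
proof -
  have dfy: "\<And>y. (f has_derivative (\<lambda>v. grad f y \<bullet> v)) (at y)" using grad_deriv df by blast
  have lin: "linear L" using dg has_derivative_linear by blast
  have alt: "\<forall>e>0. \<exists>d>0. \<forall>y. norm (y - x) < d \<longrightarrow> norm (grad f y - grad f x - L (y - x)) \<le> e * norm (y - x)"
    using dg has_derivative_at_alt by blast
  define K1 where "K1 = norm a * (2 * norm a + norm b)"
  define K2 where "K2 = norm b * (2 * norm b + norm a)"
  have K: "0 \<le> K1 + K2" unfolding K1_def K2_def by simp
  show ?thesis
  proof (rule small_zero[OF K, of "a \<bullet> L b - b \<bullet> L a", simplified])
    fix e :: real assume e: "e > 0"
    obtain d where d: "d > 0" and r: "\<And>y. norm (y - x) < d \<Longrightarrow> norm (grad f y - grad f x - L (y - x)) \<le> e * norm (y - x)"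
      using alt e by blast
    define M where "M = 2 * norm a + norm b + (2 * norm b + norm a) + 1"
    have na: "0 \<le> norm a" "0 \<le> norm b" by auto
    have M: "M > 0" "2 * norm a + norm b < M" "2 * norm b + norm a < M" unfolding M_def
      using na by linarith+
    define h where "h = d / M"
    have h: "h > 0" using d M by (simp add: h_def)
    have hM: "h * M = d" unfolding h_def using M by simp
    have h1: "h * (2 * norm a + norm b) < d" using mult_strict_left_mono[OF M(2) h] hM by simp
    have h2: "h * (2 * norm b + norm a) < d" using mult_strict_left_mono[OF M(3) h] hM by simp
    define \<Delta> where "\<Delta> = f (x + h *\<^sub>R a + h *\<^sub>R b) - f (x + h *\<^sub>R a) - f (x + h *\<^sub>R b) + f x"
    have E1: "\<bar>\<Delta> - h^2 * (a \<bullet> L b)\<bar> \<le> h^2 * (e * K1)"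
      using key_est[OF dfy lin r h h1] e unfolding \<Delta>_def K1_def by (simp add: mult.assoc)
    have E2: "\<bar>\<Delta> - h^2 * (b \<bullet> L a)\<bar> \<le> h^2 * (e * K2)"
      using key_est[OF dfy lin r h h2] e unfolding \<Delta>_def K2_def
      by (simp add: mult.assoc add.commute add.left_commute algebra_simps)
    have "\<bar>h^2 * (a \<bullet> L b - b \<bullet> L a)\<bar> \<le> h^2 * (e * (K1 + K2))"
      using E1 E2 by (simp add: algebra_simps abs_le_iff)
    then have "h^2 * \<bar>a \<bullet> L b - b \<bullet> L a\<bar> \<le> h^2 * (e * (K1 + K2))"
      by (simp add: abs_mult)
    then show "\<bar>a \<bullet> L b - b \<bullet> L a\<bar> \<le> e * (K1 + K2)"
      using h by simp
  qed
qed



lemma outer_skew_mult: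
  fixes p q u :: "real^'n"
  shows "(k *\<^sub>R (outer p q - outer q p)) *v u = k *\<^sub>R ((q \<bullet> u) *\<^sub>R p - (p \<bullet> u) *\<^sub>R q)"
  by (simp add: vec_eq_iff matrix_vector_mult_def outer_def inner_vec_def sum_distrib_left
      sum_subtractf algebra_simps)

lemma bracket_formula:
  assumes J_def: "J = (\<lambda>w. k *\<^sub>R (outer a (A *v w) - outer (A *v w) a))"
  shows "bracket J F G w = k * ((a \<bullet> grad F w) * ((A *v w) \<bullet> grad G w) - ((A *v w) \<bullet> grad F w) * (a \<bullet> grad G w))"
  unfolding bracket_def J_def outer_skew_mult
  by (simp add: inner_diff_right algebra_simps inner_commute)

lemma bracket_deriv:
  fixes G H :: "real^'n \<Rightarrow> real"
  assumes dG: "\<And>y. (G has_derivative (\<lambda>v. grad G y \<bullet> v)) (at y)"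
    and dH: "\<And>y. (H has_derivative (\<lambda>v. grad H y \<bullet> v)) (at y)"
    and gG: "(grad G has_derivative G') (at w)" and gH: "(grad H has_derivative H') (at w)"
  shows "((\<lambda>w. k * ((a \<bullet> grad G w) * ((A *v w) \<bullet> grad H w) - ((A *v w) \<bullet> grad G w) * (a \<bullet> grad H w)))
     has_derivative (\<lambda>v. k * ((a \<bullet> G' v) * ((A *v w) \<bullet> grad H w) + (a \<bullet> grad G w) * ((A *v v) \<bullet> grad H w + (A *v w) \<bullet> H' v)
        - ((A *v v) \<bullet> grad G w + (A *v w) \<bullet> G' v) * (a \<bullet> grad H w) - ((A *v w) \<bullet> grad G w) * (a \<bullet> H' v)))) (at w)"
proof -
  have lA: "((\<lambda>w. A *v w) has_derivative (\<lambda>v. A *v v)) (at w)"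
    using bounded_linear_imp_has_derivative[OF matrix_vector_mul_bounded_linear[of A]] by simp
  show ?thesis
    by (rule has_derivative_eq_rhs, (rule derivative_intros gG gH lA)+) (simp add: algebra_simps fun_eq_iff)
qed

lemma jacobi_alg:
  fixes k xF yF zF pF qF rF xG yG zG pG qG rG xH yH zH pH qH rH :: real
  shows "k*(xF * (k*(qG*yH+xG*(zH+rH)-(zG+rG)*xH-yG*qH)) - yF * (k*(pG*yH+xG*qH-qG*xH-yG*pH)))
       + k*(xG * (k*(qH*yF+xH*(zF+rF)-(zH+rH)*xF-yH*qF)) - yG * (k*(pH*yF+xH*qF-qH*xF-yH*pF)))
       + k*(xH * (k*(qF*yG+xF*(zG+rG)-(zF+rF)*xG-yF*qG)) - yH * (k*(pF*yG+xF*qG-qF*xG-yF*pG))) = 0"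
  by (simp add: algebra_simps)



theorem theoremA2:
  fixes A :: "real^'d^'d" and w0 :: "real^'d" and c :: real
    and E :: "real^'d \<Rightarrow> real" and J :: "real^'d \<Rightarrow> real^'d^'d"
  assumes "w0 \<noteq> 0" and "A *v w0 = 0" and "transpose A *v w0 = 0"
    and E_def: "E = (\<lambda>w. c - w0 \<bullet> w)"
    and J_def: "J = (\<lambda>w. (1 / (2 * (norm w0)^2)) *\<^sub>R (outer w0 (A *v w) - outer (A *v w) w0))"
  shows "(\<forall>w. transpose (J w) = - J w)
    \<and> (\<forall>G1 G2 G3. C2 G1 \<and> C2 G2 \<and> C2 G3 \<longrightarrow>
         (\<forall>w. bracket J G1 (bracket J G2 G3) w + bracket J G2 (bracket J G3 G1) w
              + bracket J G3 (bracket J G1 G2) w = 0))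
    \<and> (\<forall>w. (1/2) *\<^sub>R (A *v w) = J w *v grad E w)"
proof -
  define k where "k = 1 / (2 * (norm w0)^2)"
  have Jk: "J = (\<lambda>w. k *\<^sub>R (outer w0 (A *v w) - outer (A *v w) w0))"
    using J_def k_def by simp
  note BF = bracket_formula[OF Jk]
  have orth: "(A *v w) \<bullet> w0 = 0" for w
  proof -
    have "(A *v w) \<bullet> w0 = w0 \<bullet> (A *v w)" by (simp add: inner_commute)
    also have "\<dots> = (w0 v* A) \<bullet> w" by (simp add: dot_lmul_matrix)
    also have "\<dots> = 0" using assms(3) by simp
    finally show ?thesis .
  qed
  show ?thesis proof (intro conjI allI impI)
  show "transpose (J w) = - J w" for w
    by (simp add: J_def vec_eq_iff transpose_def outer_def algebra_simps)
  show "(1/2) *\<^sub>R (A *v w) = J w *v grad E w" for w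
  proof -
    have "(E has_derivative (\<lambda>v. - (w0 \<bullet> v))) (at w)"
      unfolding E_def by (auto intro!: derivative_eq_intros)
    then have gv: "grad E w \<bullet> v = - (w0 \<bullet> v)" for v using grad_unique by blast
    have "(grad E w + w0) \<bullet> (grad E w + w0) = 0"
      using gv[of "grad E w + w0"] by (simp add: inner_add_left inner_commute)
    then have gE: "grad E w = - w0" by (simp add: eq_neg_iff_add_eq_0)
    have n: "w0 \<bullet> w0 = (norm w0)^2" by (simp add: power2_norm_eq_inner)
    have kn: "k * (norm w0)^2 = 1/2" unfolding k_def using assms(1) by simp
    show ?thesis unfolding Jk gE outer_skew_mult
      by (simp add: orth inner_commute[of w0 "A *v w"] n kn scaleR_scaleR[symmetric] del: scaleR_scaleR) (simp add: kn)
  qed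
next
  fix G1 G2 G3 :: "real^'d \<Rightarrow> real" and w :: "real^'d"
  assume C: "C2 G1 \<and> C2 G2 \<and> C2 G3"
  define D where "D = (\<lambda>F :: real^'d \<Rightarrow> real. frechet_derivative (grad F) (at w))"
  define b where "b = A *v w"
  define X where "X = (\<lambda>F. w0 \<bullet> grad F w)"
  define Y where "Y = (\<lambda>F. b \<bullet> grad F w)"
  define Z where "Z = (\<lambda>F. (A *v b) \<bullet> grad F w)"
  define P where "P = (\<lambda>F. w0 \<bullet> D F w0)"
  define Q where "Q = (\<lambda>F. w0 \<bullet> D F b)"
  define R where "R = (\<lambda>F. b \<bullet> D F b)"
  have dF: "(F has_derivative (\<lambda>v. grad F y \<bullet> v)) (at y)" if "C2 F" for F y
    using that grad_deriv unfolding C2_def by blast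
  have gF: "(grad F has_derivative D F) (at w)" if "C2 F" for F
    using that frechet_derivative_works unfolding C2_def D_def by blast
  have sym: "b \<bullet> D F w0 = w0 \<bullet> D F b" if "C2 F" for F
    using hess_sym[OF _ gF[OF that]] that unfolding C2_def by metis
  have PB: "v \<bullet> grad (bracket J G H) w = k * ((w0 \<bullet> D G v) * (b \<bullet> grad H w) + (w0 \<bullet> grad G w) * ((A *v v) \<bullet> grad H w + b \<bullet> D H v)
        - ((A *v v) \<bullet> grad G w + b \<bullet> D G v) * (w0 \<bullet> grad H w) - (b \<bullet> grad G w) * (w0 \<bullet> D H v))"
    if "C2 G" "C2 H" for G H v
  proof -
    have "bracket J G H = (\<lambda>w. k * ((w0 \<bullet> grad G w) * ((A *v w) \<bullet> grad H w) - ((A *v w) \<bullet> grad G w) * (w0 \<bullet> grad H w)))"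
      using BF by blast
    then show ?thesis
      using grad_unique[OF bracket_deriv[OF dF[OF that(1)] dF[OF that(2)] gF[OF that(1)] gF[OF that(2)]]]
      unfolding b_def by (simp add: inner_commute)
  qed
  have T: "bracket J F (bracket J G H) w = k*(X F * (k*(Q G*Y H+X G*(Z H+R H)-(Z G+R G)*X H-Y G*Q H)) - Y F * (k*(P G*Y H+X G*Q H-Q G*X H-Y G*P H)))"
    if "C2 F" "C2 G" "C2 H" for F G H
  proof -
    have "bracket J F (bracket J G H) w = k * (X F * (b \<bullet> grad (bracket J G H) w) - Y F * (w0 \<bullet> grad (bracket J G H) w))"
      using BF unfolding X_def Y_def b_def by simp
    also have "\<dots> = k*(X F * (k*(Q G*Y H+X G*(Z H+R H)-(Z G+R G)*X H-Y G*Q H)) - Y F * (k*(P G*Y H+X G*Q H-Q G*X H-Y G*P H)))"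
      unfolding PB[OF that(2,3)] using sym[OF that(2)] sym[OF that(3)] assms(2)
      unfolding X_def Y_def Z_def P_def Q_def R_def by simp
    finally show ?thesis .
  qed
  show "bracket J G1 (bracket J G2 G3) w + bracket J G2 (bracket J G3 G1) w + bracket J G3 (bracket J G1 G2) w = 0"
    using C by (simp add: T jacobi_alg)
qed
qed

end
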